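(* Let $p_1,\ldots,p_m\in\mathbb Z_{>0}$ and $p=\operatorname{lcm}(p_1,\ldots,p_m)$. Let $\Omega_1,\ldots,\Omega_m$ be words in polynomial letters, $e_1,\ldots,e_m\in\mathbb Z_{\ge0}$, $z\in\mathbb C$, $t\in\mathbb Z_{\ge0}$, $P_1,\ldots,P_t\in\mathbb C[x]$ and $q_1,\ldots,q_t\in\mathbb C$ ($t=0$ allowed). Assume that all polynomial factors appearing are nonzero at the positive integers at which they are evaluated, after all scale changes (each polynomial $Q$ occurring in a letter of $\Omega_j$ satisfies $Q(m/(p/p_j))\ne0$ and each $P_\nu$ satisfies $P_\nu(m/p)\neq0$, for positive integers $m\le pk$), and fix compatible branches of the powers. Then for every positive integer $k$, \[ S(k)=\sum_{n=1}^{k}z^n\prod_{\nu=1}^{t}P_\nu(n)^{q_\nu}\prod_{j=1}^{m}\mathcal P_{\Omega_j}(p_jn)^{e_j}\in\operatorname{span}_{\mathbb C}\{\mathcal P_\Theta(pk)\}_\Theta, \] where $\Theta$ ranges over words in polynomial letters.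
   Context: A polynomial letter is a triple $L=(\boldsymbol\rho,\sigma,\mathbf P)$ with $\boldsymbol\rho=(\rho_1,\ldots,\rho_t)\in\mathbb C^t$, $\sigma\in\mathbb C$, $\mathbf P=(P_1,\ldots,P_t)$, $P_\nu\in\mathbb C[x]$; its value at a positive integer $n$ is $L(n)=\sigma^n\prod_{\nu=1}^tP_\nu(n)^{-\rho_\nu}$ (branches fixed). For a word $\Omega=(L_1,\ldots,L_d)$ of polynomial letters, $\mathcal P_\Omega(N)=\sum_{N\ge n_1>\cdots>n_d\ge1}\prod_{j=1}^dL_j(n_j)$ and $\mathcal P_\emptyset(N)=1$. *)

theory Defs
  imports "HOL-Analysis.Analysis" "HOL-Computational_Algebra.Polynomial"
begin

text \<open>A polynomial letter (rho, sigma, P) is encoded as a pair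
  (sigma, [(rho_1,P_1),...,(rho_t,P_t)]), i.e. the exponent list and the
  polynomial list are zipped together (so they automatically have equal length t).
  Powers with complex exponents use the principal branch (Isabelle's complex powr).\<close>

type_synonym letter = "complex \<times> (complex \<times> complex poly) list"

definition letter_val :: "letter \<Rightarrow> nat \<Rightarrow> complex" where
  "letter_val L n =
     fst L ^ n * (\<Prod>(\<rho>, P) \<leftarrow> snd L. poly P (of_nat n) powr (- \<rho>))"

definition word_val :: "letter list \<Rightarrow> nat \<Rightarrow> complex" where
  "word_val \<Omega> N =
     (\<Sum>ns \<in> {ns :: nat list. length ns = length \<Omega> \<and> sorted_wrt (>) ns
                 \<and> (\<forall>n \<in> set ns. 1 \<le> n \<and> n \<le> N)}.
        \<Prod>j<length \<Omega>. letter_val (\<Omega> ! j) (ns ! j))"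

end

theory Submission
  imports Defs
begin

fun wv :: "letter list \<Rightarrow> nat \<Rightarrow> complex" where
  "wv [] N = 1"
| "wv (L # \<Theta>) N = (\<Sum>m=1..N. letter_val L m * wv \<Theta> (m - 1))"

definition SL :: "nat \<Rightarrow> nat \<Rightarrow> nat list set" where
  "SL d N = {ns :: nat list. length ns = d \<and> sorted_wrt (>) ns
                 \<and> (\<forall>n \<in> set ns. 1 \<le> n \<and> n \<le> N)}"

lemma SL_finite: "finite (SL d N)"
proof -
  have "SL d N \<subseteq> {ns. set ns \<subseteq> {1..N} \<and> length ns = d}"
    unfolding SL_def by auto
  moreover have "finite {ns. set ns \<subseteq> {1..N} \<and> length ns = d}"
    by (rule finite_lists_length_eq) simp
  ultimately show ?thesis by (rule finite_subset)
qed

lemma SL_Suc: "SL (Suc d) N = (\<lambda>(m, ns). m # ns) ` (SIGMA m:{1..N}. SL d (m - 1))"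
proof (rule set_eqI)
  fix xs
  show "xs \<in> SL (Suc d) N \<longleftrightarrow> xs \<in> (\<lambda>(m, ns). m # ns) ` (SIGMA m:{1..N}. SL d (m - 1))"
  proof
    assume "xs \<in> SL (Suc d) N"
    then obtain m ns where xs: "xs = m # ns" unfolding SL_def by (cases xs) auto
    with \<open>xs \<in> SL (Suc d) N\<close> have "m \<in> {1..N}" "ns \<in> SL d (m - 1)"
      unfolding SL_def by auto
    then show "xs \<in> (\<lambda>(m, ns). m # ns) ` (SIGMA m:{1..N}. SL d (m - 1))"
      using xs by force
  next
    assume "xs \<in> (\<lambda>(m, ns). m # ns) ` (SIGMA m:{1..N}. SL d (m - 1))"
    then obtain m ns where xs: "xs = m # ns" and "m \<in> {1..N}" "ns \<in> SL d (m - 1)" by auto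
    then show "xs \<in> SL (Suc d) N" unfolding SL_def by fastforce
  qed
qed

lemma word_val_SL: "word_val \<Omega> N = (\<Sum>ns \<in> SL (length \<Omega>) N. \<Prod>j<length \<Omega>. letter_val (\<Omega> ! j) (ns ! j))"
  unfolding word_val_def SL_def by simp

lemma wv_eq: "word_val \<Theta> N = wv \<Theta> N"
proof (induction \<Theta> arbitrary: N)
  case Nil
  have "SL 0 N = {[]}" unfolding SL_def by auto
  then show ?case by (simp add: word_val_SL)
next
  case (Cons L \<Theta>)
  let ?d = "length \<Theta>"
  let ?f = "\<lambda>ns. \<Prod>j<length (L # \<Theta>). letter_val ((L # \<Theta>) ! j) (ns ! j)"
  have inj: "inj_on (\<lambda>(m, ns). m # ns) (SIGMA m:{1..N}. SL ?d (m - 1))"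
    by (auto simp: inj_on_def)
  have "word_val (L # \<Theta>) N = sum ?f (SL (Suc ?d) N)"
    by (simp add: word_val_SL)
  also have "\<dots> = (\<Sum>(m, ns) \<in> (SIGMA m:{1..N}. SL ?d (m - 1)). ?f (m # ns))"
    unfolding SL_Suc by (subst sum.reindex[OF inj]) (simp add: case_prod_beta o_def)
  also have "\<dots> = (\<Sum>m\<in>{1..N}. \<Sum>ns\<in>SL ?d (m - 1). ?f (m # ns))"
    by (rule sum.Sigma[symmetric]) (auto simp: SL_finite)
  also have "\<dots> = (\<Sum>m\<in>{1..N}. letter_val L m * word_val \<Theta> (m - 1))"
    by (auto simp: word_val_SL sum_distrib_left simp del: prod.lessThan_Suc intro!: sum.cong)
       (simp only: length_Cons prod.lessThan_Suc_shift, simp)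
  also have "\<dots> = wv (L # \<Theta>) N" by (simp add: Cons.IH)
  finally show ?case .
qed

definition letter_mul :: "letter \<Rightarrow> letter \<Rightarrow> letter" where
  "letter_mul L M = (fst L * fst M, snd L @ snd M)"

lemma letter_mul_val: "letter_val (letter_mul L M) n = letter_val L n * letter_val M n"
  unfolding letter_mul_def letter_val_def by (simp add: power_mult_distrib)

definition inspan :: "(nat \<Rightarrow> complex) \<Rightarrow> bool" where
  "inspan g \<longleftrightarrow> (\<exists>cs :: (complex \<times> letter list) list. \<forall>N. g N = (\<Sum>(c, \<Theta>) \<leftarrow> cs. c * wv \<Theta> N))"

definition lincomb :: "(nat \<Rightarrow> complex) \<Rightarrow> bool" where
  "lincomb a \<longleftrightarrow> (\<exists>cs :: (complex \<times> letter) list. \<forall>m. a m = (\<Sum>(c, L) \<leftarrow> cs. c * letter_val L m))"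

lemma inspan_induct:
  assumes "inspan g"
    and "P (\<lambda>N. 0)"
    and "\<And>c \<Theta> h. P h \<Longrightarrow> P (\<lambda>N. c * wv \<Theta> N + h N)"
  shows "P g"
proof -
  obtain cs where g: "\<And>N. g N = (\<Sum>(c, \<Theta>) \<leftarrow> cs. c * wv \<Theta> N)"
    using assms(1) unfolding inspan_def by blast
  have "P (\<lambda>N. \<Sum>(c, \<Theta>) \<leftarrow> cs. c * wv \<Theta> N)"
  proof (induction cs)
    case Nil then show ?case using assms(2) by simp
  next
    case (Cons x cs)
    obtain c \<Theta> where a: "x = (c, \<Theta>)" by (cases x) auto
    show ?case using assms(3)[OF Cons.IH, of c \<Theta>] by (simp add: a)
  qed
  moreover have "g = (\<lambda>N. \<Sum>(c, \<Theta>) \<leftarrow> cs. c * wv \<Theta> N)" using g by auto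
  ultimately show ?thesis by simp
qed

lemma lincomb_induct:
  assumes "lincomb a"
    and "P (\<lambda>N. 0)"
    and "\<And>c L h. P h \<Longrightarrow> P (\<lambda>N. c * letter_val L N + h N)"
  shows "P a"
proof -
  obtain cs where g: "\<And>N. a N = (\<Sum>(c, \<Theta>) \<leftarrow> cs. c * letter_val \<Theta> N)"
    using assms(1) unfolding lincomb_def by blast
  have "P (\<lambda>N. \<Sum>(c, \<Theta>) \<leftarrow> cs. c * letter_val \<Theta> N)"
  proof (induction cs)
    case Nil then show ?case using assms(2) by simp
  next
    case (Cons x cs)
    obtain c \<Theta> where a: "x = (c, \<Theta>)" by (cases x) auto
    show ?case using assms(3)[OF Cons.IH, of c \<Theta>] by (simp add: a)
  qed
  moreover have "a = (\<lambda>N. \<Sum>(c, \<Theta>) \<leftarrow> cs. c * letter_val \<Theta> N)" using g by auto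
  ultimately show ?thesis by simp
qed

lemma inspan_zero: "inspan (\<lambda>N. 0)"
  unfolding inspan_def by (rule exI[of _ "[]"]) simp

lemma inspan_wv: "inspan (wv \<Theta>)"
  unfolding inspan_def by (rule exI[of _ "[(1, \<Theta>)]"]) simp

lemma inspan_add: "inspan f \<Longrightarrow> inspan g \<Longrightarrow> inspan (\<lambda>N. f N + g N)"
  unfolding inspan_def
proof (elim exE)
  fix cs1 cs2
  assume 1: "\<forall>N. f N = (\<Sum>(c, \<Theta>)\<leftarrow>cs1. c * wv \<Theta> N)" and 2: "\<forall>N. g N = (\<Sum>(c, \<Theta>)\<leftarrow>cs2. c * wv \<Theta> N)"
  show "\<exists>cs. \<forall>N. f N + g N = (\<Sum>(c, \<Theta>)\<leftarrow>cs. c * wv \<Theta> N)"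
    by (rule exI[of _ "cs1 @ cs2"]) (simp add: 1 2)
qed

lemma inspan_scale: "inspan f \<Longrightarrow> inspan (\<lambda>N. d * f N)"
  unfolding inspan_def
proof (elim exE)
  fix cs1
  assume 1: "\<forall>N. f N = (\<Sum>(c, \<Theta>)\<leftarrow>cs1. c * wv \<Theta> N)"
  show "\<exists>cs. \<forall>N. d * f N = (\<Sum>(c, \<Theta>)\<leftarrow>cs. c * wv \<Theta> N)"
    by (rule exI[of _ "map (\<lambda>(c, \<Theta>). (d * c, \<Theta>)) cs1"])
       (simp add: 1 o_def split_def sum_list_const_mult mult.assoc)
qed

lemma inspan_const: "inspan (\<lambda>N. c)"
  using inspan_scale[OF inspan_wv[of "[]"], of c] by simp

lemma inspan_cong: "inspan f \<Longrightarrow> (\<And>N. f N = g N) \<Longrightarrow> inspan g"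
proof -
  assume "inspan f" "\<And>N. f N = g N"
  then have "f = g" by auto
  with \<open>inspan f\<close> show ?thesis by simp
qed

lemma lincomb_zero: "lincomb (\<lambda>N. 0)"
  unfolding lincomb_def by (rule exI[of _ "[]"]) simp

lemma lincomb_add: "lincomb f \<Longrightarrow> lincomb g \<Longrightarrow> lincomb (\<lambda>N. f N + g N)"
  unfolding lincomb_def
proof (elim exE)
  fix cs1 cs2
  assume 1: "\<forall>N. f N = (\<Sum>(c, \<Theta>)\<leftarrow>cs1. c * letter_val \<Theta> N)" and 2: "\<forall>N. g N = (\<Sum>(c, \<Theta>)\<leftarrow>cs2. c * letter_val \<Theta> N)"
  show "\<exists>cs. \<forall>N. f N + g N = (\<Sum>(c, \<Theta>)\<leftarrow>cs. c * letter_val \<Theta> N)"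
    by (rule exI[of _ "cs1 @ cs2"]) (simp add: 1 2)
qed

lemma lincomb_letter: "lincomb (\<lambda>N. c * letter_val L N)"
  unfolding lincomb_def by (rule exI[of _ "[(c, L)]"]) simp

lemma inspan_sum: "finite A \<Longrightarrow> (\<And>i. i \<in> A \<Longrightarrow> inspan (f i)) \<Longrightarrow> inspan (\<lambda>N. \<Sum>i\<in>A. f i N)"
proof (induction A rule: finite_induct)
  case empty then show ?case by (simp add: inspan_zero)
next
  case (insert x F)
  then show ?case using inspan_add[of "f x" "\<lambda>N. \<Sum>i\<in>F. f i N"] by simp
qed

lemma lincomb_sum: "finite A \<Longrightarrow> (\<And>i. i \<in> A \<Longrightarrow> lincomb (f i)) \<Longrightarrow> lincomb (\<lambda>N. \<Sum>i\<in>A. f i N)"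
proof (induction A rule: finite_induct)
  case empty then show ?case by (simp add: lincomb_zero)
next
  case (insert x F)
  then show ?case using lincomb_add[of "f x" "\<lambda>N. \<Sum>i\<in>F. f i N"] by simp
qed

lemma roots_sum:
  assumes "r > 0"
  shows "(\<Sum>j<r. exp (2 * of_real pi * \<i> * of_nat m / of_nat r) ^ j) = (if r dvd m then of_nat r else (0::complex))"
proof -
  define x where "x = exp (2 * of_real pi * \<i> * of_nat m / of_nat r)"
  have "x ^ r = exp (of_nat r * (2 * of_real pi * \<i> * of_nat m / of_nat r))"
    unfolding x_def by (rule exp_of_nat_mult[symmetric])
  also have "\<dots> = exp (2 * of_real pi * \<i> * of_nat m / of_nat 1)"
    using assms by simp
  also have "\<dots> = 1" by (subst complex_root_unity_eq_1) auto
  finally have xr: "x ^ r = 1" .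
  have x1: "x = 1 \<longleftrightarrow> r dvd m" unfolding x_def
    using complex_root_unity_eq_1[of r m] assms by simp
  show ?thesis
    using xr x1 by (fold x_def) (auto simp: sum_gp_strict)
qed

lemma filter_letter:
  assumes "r > 0"
  shows "lincomb (\<lambda>m. if r dvd m then letter_val L (m div r) else 0)"
proof -
  obtain \<sigma> l where L: "L = (\<sigma>, l)" by (cases L) auto
  obtain s where s: "\<sigma> = s ^ r" using exists_complex_root[of r \<sigma>] assms by auto
  define l' where "l' = map (\<lambda>(\<rho>, Q). (\<rho>, Q \<circ>\<^sub>p [:0, 1 / of_nat r:])) l"
  define PP where "PP = (\<lambda>x::complex. \<Prod>(\<rho>, Q) \<leftarrow> l. poly Q x powr (- \<rho>))"
  define w where "w = (\<lambda>j::nat. exp (2 * of_real pi * \<i> * of_nat j / of_nat r))"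
  have prodl': "(\<Prod>(\<rho>, Q) \<leftarrow> l'. poly Q x powr (- \<rho>)) = PP (x / of_nat r)" for x
    unfolding l'_def PP_def by (simp add: o_def split_def poly_pcompose field_simps)
  have wpow: "w j ^ m = w m ^ j" for j m
  proof -
    have "w j ^ m = exp (of_nat m * (2 * of_real pi * \<i> * of_nat j / of_nat r))"
      unfolding w_def by (rule exp_of_nat_mult[symmetric])
    also have "\<dots> = exp (of_nat j * (2 * of_real pi * \<i> * of_nat m / of_nat r))"
      by (simp add: field_simps)
    also have "\<dots> = w m ^ j" unfolding w_def by (rule exp_of_nat_mult)
    finally show ?thesis .
  qed
  have key: "(if r dvd m then letter_val L (m div r) else 0)
      = (\<Sum>j<r. (1 / of_nat r) * letter_val (s * w j, l') m)" for m
  proof -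
    have "(\<Sum>j<r. (1 / of_nat r) * letter_val (s * w j, l') m)
        = (1 / of_nat r) * s ^ m * PP (of_nat m / of_nat r) * (\<Sum>j<r. w m ^ j)"
    proof -
      have "(\<Sum>j<r. (1 / of_nat r) * letter_val (s * w j, l') m)
          = (\<Sum>j<r. ((1 / of_nat r) * s ^ m * PP (of_nat m / of_nat r)) * w m ^ j)"
        apply (intro sum.cong refl)
        apply (subst wpow[symmetric])
        apply (simp add: letter_val_def prodl' power_mult_distrib)
        done
      then show ?thesis by (simp add: sum_distrib_left)
    qed
    also have "\<dots> = (if r dvd m then s ^ m * PP (of_nat m / of_nat r) else 0)"
      using assms unfolding w_def by (simp add: roots_sum)
    also have "\<dots> = (if r dvd m then letter_val L (m div r) else 0)"
    proof (cases "r dvd m")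
      case True
      then obtain k where m: "m = r * k" by auto
      have "s ^ m = \<sigma> ^ k" unfolding m s by (simp add: power_mult)
      moreover have "(of_nat m / of_nat r :: complex) = of_nat k" using assms m by simp
      ultimately show ?thesis using True assms m by (simp add: letter_val_def L PP_def)
    qed simp
    finally show ?thesis by simp
  qed
  have "lincomb (\<lambda>m. \<Sum>j<r. (1 / of_nat r) * letter_val (s * w j, l') m)"
    by (rule lincomb_sum) (simp, rule lincomb_letter)
  then show ?thesis by (simp add: key)
qed

declare wv.simps(2)[simp del]

lemma sum_Suc_top: "(\<Sum>m=1..Suc N. f m) = (\<Sum>m=1..N. f m) + (f (Suc N) :: complex)"
  by (simp add: sum.cl_ivl_Suc)

lemma wv_Cons0: "wv (b # \<Theta>) 0 = 0"
  by (simp add: wv.simps(2))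

lemma wv_step: "1 \<le> m \<Longrightarrow> wv (b # \<Theta>) m = wv (b # \<Theta>) (m - 1) + letter_val b m * wv \<Theta> (m - 1)"
  by (cases m) (simp_all add: sum_Suc_top wv.simps(2))

lemma wv_Suc: "wv (b # \<Theta>) (Suc N) = wv (b # \<Theta>) N + letter_val b (Suc N) * wv \<Theta> N"
  using wv_step[of "Suc N" b \<Theta>] by simp

lemma strict_letter:
  assumes "inspan h"
  shows "inspan (\<lambda>M. \<Sum>m=1..M. letter_val L m * h (m - 1))"
proof (rule inspan_induct[OF assms, where P = "\<lambda>h. inspan (\<lambda>M. \<Sum>m=1..M. letter_val L m * h (m - 1))"])
  show "inspan (\<lambda>M. \<Sum>m=1..M. letter_val L m * 0)" by (simp add: inspan_zero)
next
  fix c \<Theta> h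
  assume IH: "inspan (\<lambda>M. \<Sum>m=1..M. letter_val L m * h (m - 1))"
  have "inspan (\<lambda>M. c * wv (L # \<Theta>) M + (\<Sum>m=1..M. letter_val L m * h (m - 1)))"
    by (intro inspan_add inspan_scale inspan_wv IH)
  then show "inspan (\<lambda>M. \<Sum>m=1..M. letter_val L m * (c * wv \<Theta> (m - 1) + h (m - 1)))"
    by (rule inspan_cong) (simp add: wv.simps(2) distrib_left sum.distrib sum_distrib_left mult_ac)
qed

lemma strict_lincomb:
  assumes "lincomb a" "inspan h"
  shows "inspan (\<lambda>M. \<Sum>m=1..M. a m * h (m - 1))"
proof (rule lincomb_induct[OF assms(1), where P = "\<lambda>a. inspan (\<lambda>M. \<Sum>m=1..M. a m * h (m - 1))"])
  show "inspan (\<lambda>M. \<Sum>m=1..M. 0 * h (m - 1))" by (simp add: inspan_zero)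
next
  fix c L g
  assume IH: "inspan (\<lambda>M. \<Sum>m=1..M. g m * h (m - 1))"
  have "inspan (\<lambda>M. c * (\<Sum>m=1..M. letter_val L m * h (m - 1)) + (\<Sum>m=1..M. g m * h (m - 1)))"
    by (intro inspan_add inspan_scale strict_letter assms IH)
  then show "inspan (\<lambda>M. \<Sum>m=1..M. (c * letter_val L m + g m) * h (m - 1))"
    by (rule inspan_cong) (simp add: sum_distrib_left sum.distrib[symmetric] algebra_simps)
qed

lemma nonstrict_wv: "inspan (\<lambda>M. \<Sum>m=1..M. letter_val L m * wv \<Theta> m)"
proof (cases \<Theta>)
  case Nil
  show ?thesis using inspan_wv[of "[L]"] by (rule inspan_cong) (simp add: Nil wv.simps(2))
next
  case (Cons b \<Theta>')
  have "inspan (\<lambda>M. wv (L # \<Theta>) M + wv (letter_mul L b # \<Theta>') M)"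
    by (intro inspan_add inspan_wv)
  then show ?thesis
  proof (rule inspan_cong)
    fix M
    have "(\<Sum>m=1..M. letter_val L m * wv \<Theta> m)
       = (\<Sum>m=1..M. letter_val L m * wv \<Theta> (m - 1) + letter_val (letter_mul L b) m * wv \<Theta>' (m - 1))"
    proof (intro sum.cong refl)
      fix m assume "m \<in> {1..M}"
      then have "wv \<Theta> m = wv \<Theta> (m - 1) + letter_val b m * wv \<Theta>' (m - 1)"
        unfolding Cons by (intro wv_step) simp
      then show "letter_val L m * wv \<Theta> m = letter_val L m * wv \<Theta> (m - 1) + letter_val (letter_mul L b) m * wv \<Theta>' (m - 1)"
        by (simp add: letter_mul_val algebra_simps)
    qed
    then show "wv (L # \<Theta>) M + wv (letter_mul L b # \<Theta>') M = (\<Sum>m=1..M. letter_val L m * wv \<Theta> m)"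
      by (simp add: sum.distrib wv.simps(2))
  qed
qed

lemma nonstrict_letter:
  assumes "inspan h"
  shows "inspan (\<lambda>M. \<Sum>m=1..M. letter_val L m * h m)"
proof (rule inspan_induct[OF assms, where P = "\<lambda>h. inspan (\<lambda>M. \<Sum>m=1..M. letter_val L m * h m)"])
  show "inspan (\<lambda>M. \<Sum>m=1..M. letter_val L m * 0)" by (simp add: inspan_zero)
next
  fix c \<Theta> h
  assume IH: "inspan (\<lambda>M. \<Sum>m=1..M. letter_val L m * h m)"
  have "inspan (\<lambda>M. c * (\<Sum>m=1..M. letter_val L m * wv \<Theta> m) + (\<Sum>m=1..M. letter_val L m * h m))"
    by (intro inspan_add inspan_scale nonstrict_wv IH)
  then show "inspan (\<lambda>M. \<Sum>m=1..M. letter_val L m * (c * wv \<Theta> m + h m))"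
    by (rule inspan_cong) (simp add: distrib_left sum.distrib sum_distrib_left mult_ac)
qed

lemma nonstrict_lincomb:
  assumes "lincomb a" "inspan h"
  shows "inspan (\<lambda>M. \<Sum>m=1..M. a m * h m)"
proof (rule lincomb_induct[OF assms(1), where P = "\<lambda>a. inspan (\<lambda>M. \<Sum>m=1..M. a m * h m)"])
  show "inspan (\<lambda>M. \<Sum>m=1..M. 0 * h m)" by (simp add: inspan_zero)
next
  fix c L g
  assume IH: "inspan (\<lambda>M. \<Sum>m=1..M. g m * h m)"
  have "inspan (\<lambda>M. c * (\<Sum>m=1..M. letter_val L m * h m) + (\<Sum>m=1..M. g m * h m))"
    by (intro inspan_add inspan_scale nonstrict_letter assms IH)
  then show "inspan (\<lambda>M. \<Sum>m=1..M. (c * letter_val L m + g m) * h m)"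
    by (rule inspan_cong) (simp add: sum_distrib_left sum.distrib[symmetric] algebra_simps)
qed

lemma wv_prod: "inspan (\<lambda>N. wv A N * wv B N)"
proof (induction A arbitrary: B)
  case Nil
  show ?case using inspan_wv[of B] by (rule inspan_cong) simp
next
  case (Cons a A')
  note IHA = Cons.IH
  show ?case
  proof (induction B)
    case Nil
    show ?case using inspan_wv[of "a # A'"] by (rule inspan_cong) simp
  next
    case (Cons b B')
    note IHB = Cons.IH
    have rec: "wv (a # A') N * wv (b # B') N
      = (\<Sum>m=1..N. letter_val a m * (wv A' (m - 1) * wv (b # B') (m - 1))
                 + letter_val b m * (wv (a # A') (m - 1) * wv B' (m - 1))
                 + letter_val (letter_mul a b) m * (wv A' (m - 1) * wv B' (m - 1)))" for N
    proof (induction N)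
      case 0 then show ?case by (simp add: wv_Cons0)
    next
      case (Suc N)
      show ?case
        unfolding wv_Suc sum_Suc_top Suc.IH[symmetric]
        by (simp add: letter_mul_val wv_Suc algebra_simps)
    qed
    have "inspan (\<lambda>N. (\<Sum>m=1..N. letter_val a m * (wv A' (m - 1) * wv (b # B') (m - 1)))
                 + (\<Sum>m=1..N. letter_val b m * (wv (a # A') (m - 1) * wv B' (m - 1)))
                 + (\<Sum>m=1..N. letter_val (letter_mul a b) m * (wv A' (m - 1) * wv B' (m - 1))))"
      by (intro inspan_add strict_letter[where h = "\<lambda>N. wv _ N * wv _ N"] IHA IHB)
    then show ?case
      by (rule inspan_cong) (simp add: rec sum.distrib)
  qed
qed

lemma inspan_mult:
  assumes "inspan f" "inspan g"
  shows "inspan (\<lambda>N. f N * g N)"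
proof (rule inspan_induct[OF assms(1), where P = "\<lambda>f. inspan (\<lambda>N. f N * g N)"])
  show "inspan (\<lambda>N. 0 * g N)" by (simp add: inspan_zero)
next
  fix c \<Theta> h
  assume IH: "inspan (\<lambda>N. h N * g N)"
  have A: "inspan (\<lambda>N. wv \<Theta> N * g N)"
  proof (rule inspan_induct[OF assms(2), where P = "\<lambda>g. inspan (\<lambda>N. wv \<Theta> N * g N)"])
    show "inspan (\<lambda>N. wv \<Theta> N * 0)" by (simp add: inspan_zero)
  next
    fix d \<Phi> k
    assume IH2: "inspan (\<lambda>N. wv \<Theta> N * k N)"
    have "inspan (\<lambda>N. d * (wv \<Theta> N * wv \<Phi> N) + wv \<Theta> N * k N)"
      by (intro inspan_add inspan_scale wv_prod IH2)
    then show "inspan (\<lambda>N. wv \<Theta> N * (d * wv \<Phi> N + k N))"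
      by (rule inspan_cong) (simp add: algebra_simps)
  qed
  have "inspan (\<lambda>N. c * (wv \<Theta> N * g N) + h N * g N)"
    by (intro inspan_add inspan_scale A IH)
  then show "inspan (\<lambda>N. (c * wv \<Theta> N + h N) * g N)"
    by (rule inspan_cong) (simp add: algebra_simps)
qed

lemma inspan_power: "inspan f \<Longrightarrow> inspan (\<lambda>N. f N ^ e)"
proof (induction e)
  case 0 then show ?case by (simp add: inspan_const)
next
  case (Suc e)
  then show ?case using inspan_mult[of f "\<lambda>N. f N ^ e"] by simp
qed

lemma inspan_prod: "(\<And>j. j < n \<Longrightarrow> inspan (f j)) \<Longrightarrow> inspan (\<lambda>N. \<Prod>j<(n::nat). f j N)"
proof (induction n)
  case 0 then show ?case by (simp add: inspan_const)
next
  case (Suc n)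
  then show ?case using inspan_mult[of "\<lambda>N. \<Prod>j<n. f j N" "f n"] by simp
qed

lemma reindex_dvd:
  assumes "r > 0"
  shows "(\<Sum>m=1..(M::nat). if r dvd m then F (m div r) else 0) = (\<Sum>n=1..M div r. (F n :: complex))"
proof (induction M)
  case 0 then show ?case by simp
next
  case (Suc M)
  show ?case
  proof (cases "r dvd Suc M")
    case True
    then have "Suc M div r = Suc (M div r)" using div_Suc[of M r] by (auto simp: dvd_eq_mod_eq_0)
    then show ?thesis using True Suc by (simp add: sum_Suc_top)
  next
    case False
    then have "Suc M div r = M div r" using div_Suc[of M r] by (auto simp: dvd_eq_mod_eq_0)
    then show ?thesis using False Suc by (simp add: sum_Suc_top)
  qed
qed

lemma div_pred: "r > 0 \<Longrightarrow> k \<ge> 1 \<Longrightarrow> (r * k - 1) div r = k - (1::nat)"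
proof -
  assume "r > 0" "k \<ge> 1"
  then obtain j where k: "k = Suc j" by (cases k) auto
  have "(r * k - 1) div r = j"
  proof (rule div_nat_eqI)
    show "r * j \<le> r * k - 1" using \<open>r > 0\<close> k by simp
    show "r * k - 1 < r * Suc j" using \<open>r > 0\<close> k by simp
  qed
  then show ?thesis using k by simp
qed

lemma scaling:
  assumes "r > 0"
  shows "\<exists>g. inspan g \<and> (\<forall>m. g m = wv \<Theta> (m div r))"
proof (induction \<Theta>)
  case Nil
  show ?case by (rule exI[of _ "wv []"]) (simp add: inspan_const)
next
  case (Cons L \<Theta>)
  then obtain h where h: "inspan h" "\<And>m. h m = wv \<Theta> (m div r)" by blast
  define a where "a = (\<lambda>m. if r dvd m then letter_val L (m div r) else 0)"
  have "inspan (\<lambda>M. \<Sum>m=1..M. a m * h (m - 1))"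
    unfolding a_def by (rule strict_lincomb[OF filter_letter[OF assms] h(1)])
  moreover have "(\<Sum>m=1..M. a m * h (m - 1)) = wv (L # \<Theta>) (M div r)" for M
  proof -
    have "(\<Sum>m=1..M. a m * h (m - 1))
        = (\<Sum>m=1..M. if r dvd m then letter_val L (m div r) * wv \<Theta> (m div r - 1) else 0)"
    proof (intro sum.cong refl)
      fix m assume m: "m \<in> {1..M}"
      show "a m * h (m - 1) = (if r dvd m then letter_val L (m div r) * wv \<Theta> (m div r - 1) else 0)"
      proof (cases "r dvd m")
        case True
        then obtain k where k: "m = r * k" by auto
        with m assms have "k \<ge> 1" by (cases k) auto
        then have "(m - 1) div r = m div r - 1" using k assms div_pred by simp
        then show ?thesis using True by (simp add: a_def h(2))
      qed (simp add: a_def)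
    qed
    also have "\<dots> = (\<Sum>n=1..M div r. letter_val L n * wv \<Theta> (n - 1))"
      by (rule reindex_dvd[OF assms])
    also have "\<dots> = wv (L # \<Theta>) (M div r)" by (simp add: wv.simps(2))
    finally show ?thesis .
  qed
  ultimately show ?case by (intro exI[of _ "\<lambda>M. \<Sum>m=1..M. a m * h (m - 1)"]) simp
qed

theorem theorem6p3:
  fixes mm :: nat
    and ps :: "nat \<Rightarrow> nat"
    and \<Omega>s :: "nat \<Rightarrow> letter list"
    and es :: "nat \<Rightarrow> nat"
    and z :: complex
    and Ps :: "(complex \<times> complex poly) list"
  assumes ps_pos: "\<forall>j<mm. ps j > 0"
  defines "p \<equiv> Lcm (ps ` {..<mm})"
  defines "S \<equiv> (\<lambda>k::nat. \<Sum>n=1..k.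
              z ^ n * (\<Prod>(q, P) \<leftarrow> Ps. poly P (of_nat n) powr q)
                    * (\<Prod>j<mm. word_val (\<Omega>s j) (ps j * n) ^ es j))"
  shows "\<exists>cs :: (complex \<times> letter list) list. \<forall>k::nat. k \<ge> 1 \<longrightarrow>
           ((\<forall>j<mm. \<forall>L \<in> set (\<Omega>s j). \<forall>(\<rho>, Q) \<in> set (snd L). \<forall>m::nat.
                 1 \<le> m \<and> m \<le> p * k \<longrightarrow>
                 poly Q (of_nat m / of_nat (p div ps j)) \<noteq> 0)
            \<and> (\<forall>(q, P) \<in> set Ps. \<forall>m::nat. 1 \<le> m \<and> m \<le> p * k \<longrightarrow>
                 poly P (of_nat m / of_nat p) \<noteq> 0))
           \<longrightarrow> S k = (\<Sum>(c, \<Theta>) \<leftarrow> cs. c * word_val \<Theta> (p * k))"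
proof -
  have p_pos: "p > 0"
    unfolding p_def using ps_pos by (subst neq0_conv[symmetric], subst Lcm_0_iff) auto
  have dvdp: "ps j dvd p" if "j < mm" for j
    unfolding p_def using that by (intro dvd_Lcm) auto
  define r where "r = (\<lambda>j. p div ps j)"
  have r_pos: "r j > 0" if "j < mm" for j
    using dvdp[OF that] ps_pos that p_pos unfolding r_def
    by (metis dvd_div_eq_0_iff not_gr0)
  have "\<forall>j. \<exists>h. j < mm \<longrightarrow> inspan h \<and> (\<forall>m. h m = wv (\<Omega>s j) (m div r j))"
    using scaling r_pos by blast
  then obtain g where g: "\<And>j. j < mm \<Longrightarrow> inspan (g j) \<and> (\<forall>m. g j m = wv (\<Omega>s j) (m div r j))"
    by metis
  define G where "G = (\<lambda>m. \<Prod>j<mm. g j m ^ es j)"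
  have G_span: "inspan G"
    unfolding G_def by (intro inspan_prod inspan_power) (use g in blast)
  define L0 :: letter where "L0 = (z, map (\<lambda>(q, P). (- q, P)) Ps)"
  have L0_val: "letter_val L0 n = z ^ n * (\<Prod>(q, P) \<leftarrow> Ps. poly P (of_nat n) powr q)" for n
    unfolding L0_def letter_val_def by (simp add: o_def split_def)
  have G_pn: "G (p * n) = (\<Prod>j<mm. word_val (\<Omega>s j) (ps j * n) ^ es j)" for n
    unfolding G_def
  proof (intro prod.cong refl)
    fix j assume "j \<in> {..<mm}"
    then have j: "j < mm" by simp
    have "p = r j * ps j" unfolding r_def using dvdp[OF j] by simp
    then have "p * n div r j = ps j * n" using r_pos[OF j] by simp
    then show "g j (p * n) ^ es j = word_val (\<Omega>s j) (ps j * n) ^ es j"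
      using g[OF j] by (simp add: wv_eq)
  qed
  define a where "a = (\<lambda>m. if p dvd m then letter_val L0 (m div p) else 0)"
  have "inspan (\<lambda>M. \<Sum>m=1..M. a m * G m)"
    unfolding a_def by (rule nonstrict_lincomb[OF filter_letter[OF p_pos] G_span])
  then obtain cs where cs0: "\<forall>M. (\<Sum>m=1..M. a m * G m) = (\<Sum>(c, \<Theta>) \<leftarrow> cs. c * wv \<Theta> M)"
    unfolding inspan_def by blast
  note cs = cs0[rule_format]
  have "S k = (\<Sum>(c, \<Theta>) \<leftarrow> cs. c * word_val \<Theta> (p * k))" for k
  proof -
    have "S k = (\<Sum>n=1..k. letter_val L0 n * G (p * n))"
      unfolding S_def by (simp add: L0_val G_pn)
    also have "\<dots> = (\<Sum>n=1..(p * k) div p. letter_val L0 n * G (p * n))"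
      using p_pos by simp
    also have "\<dots> = (\<Sum>m=1..p * k. if p dvd m then letter_val L0 (m div p) * G (p * (m div p)) else 0)"
      by (rule reindex_dvd[OF p_pos, symmetric])
    also have "\<dots> = (\<Sum>m=1..p * k. a m * G m)"
      by (intro sum.cong refl) (auto simp: a_def)
    also have "\<dots> = (\<Sum>(c, \<Theta>) \<leftarrow> cs. c * word_val \<Theta> (p * k))"
      using cs[of "p * k"] by (simp add: wv_eq)
    finally show ?thesis .
  qed
  then show ?thesis by blast
qed

end
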